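(* (a) Let $C$ and $D$ be cones in $\mathbb{R}^n$ and $x_1,x_2,x_3\in\mathbb{R}^n$ three distinct collinear points with $x_3\notin[x_1,x_2]$. Then the polyhedra $(x_1+C)\cap(x_3+D)$ and $(x_2+C)\cap(x_3+D)$ are homothetic. (b) Let $n\ge2$ and $z\in\mathbb{R}^n$ with $\dim\big(\Diamond_n\cap(z+\Diamond_n)\big)=n$. Then there exists $\epsilon>0$ such that for all $\lambda\in(1-\epsilon,1+\epsilon)$, $$\mathcal{N}\Big(\big(e_n+\mathbb{R}_+(\Diamond_n-e_n)\big)\cap\big(\lambda z-e_n+\mathbb{R}_+(\Diamond_n+e_n)\big)\Big)=\mathcal{N}\Big(\big(e_n+\mathbb{R}_+(\Diamond_n-e_n)\big)\cap\big(z-e_n+\mathbb{R}_+(\Diamond_n+e_n)\big)\Big).$$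
   Context: A cone is a finitely generated pointed polyhedral cone $\mathbb{R}_+x_1+\cdots+\mathbb{R}_+x_k\subset\mathbb{R}^n$ containing no nonzero linear subspace; $\mathbb{R}_+X$ denotes the set of nonnegative linear combinations of elements of $X$. $\Diamond_n=\operatorname{conv}(\pm e_1,\ldots,\pm e_n)\subset\mathbb{R}^n$. For an $n$-dimensional polytope $P\subset\mathbb{R}^n$, its normal fan $\mathcal{N}(P)$ is the fan whose maximal cones are $(\mathbb{R}_+(P-v))^{\circ}$ for $v$ ranging over the vertices of $P$, where $C^{\circ}=\{x:x\cdot y\ge0\text{ for all }y\in C\}$. *)

theory Defs
  imports "HOL-Analysis.Analysis"
begin

text \<open>\<open>\<real>\<^sub>+X\<close>: the set of nonnegative linear combinations of (finitely many) elements of X.\<close>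
definition nonneg_comb :: "('a::real_vector) set \<Rightarrow> 'a set" where
  "nonneg_comb X = {y. \<exists>S c. finite S \<and> S \<subseteq> X \<and> (\<forall>x\<in>S. c x \<ge> (0::real)) \<and>
                          y = (\<Sum>x\<in>S. c x *\<^sub>R x)}"

definition is_cone :: "('a::real_vector) set \<Rightarrow> bool" where
  "is_cone C \<longleftrightarrow> (\<exists>X. finite X \<and> C = nonneg_comb X) \<and>
                 (\<forall>L. subspace L \<and> L \<subseteq> C \<longrightarrow> L = {0})"

definition dual_cone :: "('a::real_inner) set \<Rightarrow> 'a set" where
  "dual_cone C = {x. \<forall>y\<in>C. x \<bullet> y \<ge> 0}"

text \<open>Normal fan, represented by its set of maximal cones.\<close>
definition normal_fan :: "('a::real_inner) set \<Rightarrow> 'a set set" where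
  "normal_fan P = {dual_cone (nonneg_comb ((\<lambda>y. y - v) ` P)) | v. v extreme_point_of P}"

definition cross_polytope :: "(real^'n) set" where
  "cross_polytope = convex hull (\<Union>i. {axis i 1, - axis i 1})"

definition homothetic :: "('a::real_vector) set \<Rightarrow> 'a set \<Rightarrow> bool" where
  "homothetic P Q \<longleftrightarrow> (\<exists>c t. c > 0 \<and> P = (\<lambda>x. t + c *\<^sub>R x) ` Q)"

end

theory Submission
  imports Defs
begin

definition NC :: "('a::real_inner) set \<Rightarrow> 'a \<Rightarrow> 'a set" where
  "NC A a = {x. \<forall>p\<in>A. x \<bullet> a \<le> x \<bullet> p}"

lemma nc_base: "x \<in> X \<Longrightarrow> x \<in> nonneg_comb X"
  unfolding nonneg_comb_def
  by (rule CollectI, rule exI[of _ "{x}"], rule exI[of _ "\<lambda>_. 1"]) auto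

lemma dual_nc: "dual_cone (nonneg_comb ((\<lambda>y. y - v) ` P)) = NC P v"
proof
  show "dual_cone (nonneg_comb ((\<lambda>y. y - v) ` P)) \<subseteq> NC P v"
  proof
    fix x assume x: "x \<in> dual_cone (nonneg_comb ((\<lambda>y. y - v) ` P))"
    show "x \<in> NC P v" unfolding NC_def
    proof (clarify)
      fix p assume "p \<in> P"
      then have "p - v \<in> nonneg_comb ((\<lambda>y. y - v) ` P)" by (intro nc_base) auto
      then have "x \<bullet> (p - v) \<ge> 0" using x unfolding dual_cone_def by blast
      then show "x \<bullet> v \<le> x \<bullet> p" by (simp add: inner_diff_right)
    qed
  qed
next
  show "NC P v \<subseteq> dual_cone (nonneg_comb ((\<lambda>y. y - v) ` P))"
  proof
    fix x assume x: "x \<in> NC P v"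
    show "x \<in> dual_cone (nonneg_comb ((\<lambda>y. y - v) ` P))"
      unfolding dual_cone_def
    proof (clarify)
      fix y assume "y \<in> nonneg_comb ((\<lambda>y. y - v) ` P)"
      then obtain S c where S: "finite S" "S \<subseteq> (\<lambda>y. y - v) ` P" "\<forall>u\<in>S. c u \<ge> 0"
        and y: "y = (\<Sum>u\<in>S. c u *\<^sub>R u)" unfolding nonneg_comb_def by blast
      have "x \<bullet> y = (\<Sum>u\<in>S. c u * (x \<bullet> u))" by (simp add: y inner_sum_right)
      also have "\<dots> \<ge> 0"
      proof (rule sum_nonneg)
        fix u assume "u \<in> S"
        then obtain p where "p \<in> P" "u = p - v" using S by auto
        then have "x \<bullet> u \<ge> 0" using x by (auto simp: NC_def inner_diff_right)
        then show "c u * (x \<bullet> u) \<ge> 0" using S \<open>u\<in>S\<close> by simp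
      qed
      finally show "0 \<le> x \<bullet> y" .
    qed
  qed
qed

lemma normal_fan_NC: "normal_fan P = {NC P v | v. v extreme_point_of P}"
  unfolding normal_fan_def dual_nc ..

definition FANSET :: "('a::real_inner) set \<Rightarrow> 'a set \<Rightarrow> 'a set set" where
  "FANSET A B = {NC A a \<inter> NC B b | a b. a \<in> A \<and> b \<in> B \<and>
     (\<exists>x. (\<forall>p\<in>A. p \<noteq> a \<longrightarrow> x \<bullet> a < x \<bullet> p) \<and> (\<forall>q\<in>B. q \<noteq> b \<longrightarrow> x \<bullet> b < x \<bullet> q))}"

lemma NC_sum:
  fixes A B :: "'a::euclidean_space set"
  assumes al: "\<alpha> > 0" and be: "\<beta> > 0" and a: "a \<in> A" and b: "b \<in> B"
  shows "NC ((\<lambda>(p,q). w + \<alpha> *\<^sub>R p + \<beta> *\<^sub>R q) ` (A \<times> B)) (w + \<alpha> *\<^sub>R a + \<beta> *\<^sub>R b)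
         = NC A a \<inter> NC B b"
proof safe
  fix y assume y: "y \<in> NC ((\<lambda>(p,q). w + \<alpha> *\<^sub>R p + \<beta> *\<^sub>R q) ` (A \<times> B)) (w + \<alpha> *\<^sub>R a + \<beta> *\<^sub>R b)"
  show "y \<in> NC A a" unfolding NC_def
  proof clarify
    fix p assume "p \<in> A"
    then have "y \<bullet> (w + \<alpha> *\<^sub>R a + \<beta> *\<^sub>R b) \<le> y \<bullet> (w + \<alpha> *\<^sub>R p + \<beta> *\<^sub>R b)"
      using y b unfolding NC_def by force
    then show "y \<bullet> a \<le> y \<bullet> p" using al by (simp add: inner_add_right)
  qed
  show "y \<in> NC B b" unfolding NC_def
  proof clarify
    fix q assume "q \<in> B"
    then have "y \<bullet> (w + \<alpha> *\<^sub>R a + \<beta> *\<^sub>R b) \<le> y \<bullet> (w + \<alpha> *\<^sub>R a + \<beta> *\<^sub>R q)"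
      using y a unfolding NC_def by force
    then show "y \<bullet> b \<le> y \<bullet> q" using be by (simp add: inner_add_right)
  qed
next
  fix y assume ya: "y \<in> NC A a" and yb: "y \<in> NC B b"
  show "y \<in> NC ((\<lambda>(p,q). w + \<alpha> *\<^sub>R p + \<beta> *\<^sub>R q) ` (A \<times> B)) (w + \<alpha> *\<^sub>R a + \<beta> *\<^sub>R b)"
    unfolding NC_def
  proof clarify
    fix p q assume "p \<in> A" "q \<in> B"
    then have "y \<bullet> a \<le> y \<bullet> p" "y \<bullet> b \<le> y \<bullet> q" using ya yb by (auto simp: NC_def)
    then have "\<alpha> * (y \<bullet> a) \<le> \<alpha> * (y \<bullet> p)" "\<beta> * (y \<bullet> b) \<le> \<beta> * (y \<bullet> q)"
      using al be by (auto intro: mult_left_mono)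
    then show "y \<bullet> (w + \<alpha> *\<^sub>R a + \<beta> *\<^sub>R b) \<le> y \<bullet> (w + \<alpha> *\<^sub>R p + \<beta> *\<^sub>R q)"
      by (simp add: inner_add_right)
  qed
qed

lemma fan_sum:
  fixes A B :: "'a::euclidean_space set"
  assumes al: "\<alpha> > 0" and be: "\<beta> > 0"
    and P: "P = (\<lambda>(p,q). w + \<alpha> *\<^sub>R p + \<beta> *\<^sub>R q) ` (A \<times> B)"
    and poly: "polyhedron P"
  shows "normal_fan P = FANSET A B"
proof -
  have "{NC P v | v. v extreme_point_of P} \<subseteq> FANSET A B"
  proof
    fix K assume "K \<in> {NC P v | v. v extreme_point_of P}"
    then obtain v where Kv: "K = NC P v" and v: "v extreme_point_of P" by blast
    then have "{v} exposed_face_of P"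
      using exposed_face_of_polyhedron[OF poly] face_of_singleton by blast
    then obtain c d where cd: "P \<subseteq> {x. c \<bullet> x \<le> d}" "{v} = P \<inter> {x. c \<bullet> x = d}"
      unfolding exposed_face_of_def by blast
    have strict: "\<And>p. p \<in> P \<Longrightarrow> p \<noteq> v \<Longrightarrow> (-c) \<bullet> v < (-c) \<bullet> p"
    proof -
      fix p assume "p \<in> P" "p \<noteq> v"
      then have "c \<bullet> p \<le> d" "c \<bullet> p \<noteq> d" using cd by auto
      moreover have "c \<bullet> v = d" using cd by auto
      ultimately show "(-c) \<bullet> v < (-c) \<bullet> p" by simp
    qed
    from v have "v \<in> P" by (simp add: extreme_point_of_def)
    then obtain a b where ab: "a \<in> A" "b \<in> B" "v = w + \<alpha> *\<^sub>R a + \<beta> *\<^sub>R b"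
      using P by auto
    have sa: "\<forall>p\<in>A. p \<noteq> a \<longrightarrow> (-c) \<bullet> a < (-c) \<bullet> p"
    proof clarify
      fix p assume "p \<in> A" "p \<noteq> a"
      then have "w + \<alpha> *\<^sub>R p + \<beta> *\<^sub>R b \<in> P" "w + \<alpha> *\<^sub>R p + \<beta> *\<^sub>R b \<noteq> v"
        using P ab al by auto
      then have "(-c) \<bullet> v < (-c) \<bullet> (w + \<alpha> *\<^sub>R p + \<beta> *\<^sub>R b)" using strict by blast
      then have "\<alpha> * ((-c) \<bullet> a) < \<alpha> * ((-c) \<bullet> p)" using ab by (simp add: inner_add_right)
      then show "(-c) \<bullet> a < (-c) \<bullet> p" using al by simp
    qed
    have sb: "\<forall>q\<in>B. q \<noteq> b \<longrightarrow> (-c) \<bullet> b < (-c) \<bullet> q"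
    proof clarify
      fix q assume "q \<in> B" "q \<noteq> b"
      then have "w + \<alpha> *\<^sub>R a + \<beta> *\<^sub>R q \<in> P" "w + \<alpha> *\<^sub>R a + \<beta> *\<^sub>R q \<noteq> v"
        using P ab be by auto
      then have "(-c) \<bullet> v < (-c) \<bullet> (w + \<alpha> *\<^sub>R a + \<beta> *\<^sub>R q)" using strict by blast
      then have "\<beta> * ((-c) \<bullet> b) < \<beta> * ((-c) \<bullet> q)" using ab by (simp add: inner_add_right)
      then show "(-c) \<bullet> b < (-c) \<bullet> q" using be by simp
    qed
    have "NC P v = NC A a \<inter> NC B b" using NC_sum[OF al be ab(1,2), of w] P ab by simp
    then show "K \<in> FANSET A B"
      unfolding FANSET_def Kv using ab sa sb by blast
  qed
  moreover have "FANSET A B \<subseteq> {NC P v | v. v extreme_point_of P}"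
  proof
    fix K assume "K \<in> FANSET A B"
    then obtain a b x where ab: "K = NC A a \<inter> NC B b" "a \<in> A" "b \<in> B"
      and sa: "\<forall>p\<in>A. p \<noteq> a \<longrightarrow> x \<bullet> a < x \<bullet> p" and sb: "\<forall>q\<in>B. q \<noteq> b \<longrightarrow> x \<bullet> b < x \<bullet> q"
      unfolding FANSET_def by blast
    define v where "v = w + \<alpha> *\<^sub>R a + \<beta> *\<^sub>R b"
    have vP: "v \<in> P" using P ab v_def by auto
    have strict: "x \<bullet> v < x \<bullet> p" if pP: "p \<in> P" "p \<noteq> v" for p
    proof -
      obtain p1 q1 where pq: "p1 \<in> A" "q1 \<in> B" "p = w + \<alpha> *\<^sub>R p1 + \<beta> *\<^sub>R q1"
        using P pP by auto
      have ne: "p1 \<noteq> a \<or> q1 \<noteq> b" using pP pq v_def by auto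
      have l1: "x \<bullet> a \<le> x \<bullet> p1" using sa pq(1) by (cases "p1 = a") (auto intro: less_imp_le)
      have l2: "x \<bullet> b \<le> x \<bullet> q1" using sb pq(2) by (cases "q1 = b") (auto intro: less_imp_le)
      have m1: "\<alpha> * (x \<bullet> a) \<le> \<alpha> * (x \<bullet> p1)" using l1 al by (simp add: mult_left_mono)
      have m2: "\<beta> * (x \<bullet> b) \<le> \<beta> * (x \<bullet> q1)" using l2 be by (simp add: mult_left_mono)
      have "\<alpha> * (x \<bullet> a) + \<beta> * (x \<bullet> b) < \<alpha> * (x \<bullet> p1) + \<beta> * (x \<bullet> q1)"
      proof (cases "p1 = a")
        case True
        then have "q1 \<noteq> b" using ne by simp
        then have "x \<bullet> b < x \<bullet> q1" using sb pq(2) by simp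
        then have "\<beta> * (x \<bullet> b) < \<beta> * (x \<bullet> q1)" using be by simp
        then show ?thesis using m1 by linarith
      next
        case False
        then have "x \<bullet> a < x \<bullet> p1" using sa pq(1) by simp
        then have "\<alpha> * (x \<bullet> a) < \<alpha> * (x \<bullet> p1)" using al by simp
        then show ?thesis using m2 by linarith
      qed
      then show ?thesis using pq v_def by (simp add: inner_add_right)
    qed
    have ext: "v extreme_point_of P"
      unfolding extreme_point_of_def
    proof (intro conjI vP ballI notI)
      fix p q assume pq: "p \<in> P" "q \<in> P" "v \<in> open_segment p q"
      then obtain u where u: "p \<noteq> q" "0 < u" "u < 1" "v = (1 - u) *\<^sub>R p + u *\<^sub>R q"
        by (auto simp: in_segment)
      have "v \<noteq> p" "v \<noteq> q" using pq(3) by (auto simp: open_segment_def)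
      then have "x \<bullet> v < x \<bullet> p" "x \<bullet> v < x \<bullet> q" using strict pq by auto
      then have "(1-u) * (x \<bullet> v) < (1-u) * (x \<bullet> p)" "u * (x \<bullet> v) < u * (x \<bullet> q)"
        using u by simp_all
      then have "(1-u) * (x \<bullet> v) + u * (x \<bullet> v) < (1-u) * (x \<bullet> p) + u * (x \<bullet> q)"
        by linarith
      then show False using u by (simp add: inner_add_right algebra_simps)
    qed
    have "NC P v = K" using NC_sum[OF al be ab(2,3), of w] P ab v_def by simp
    then show "K \<in> {NC P v | v. v extreme_point_of P}" using ext by blast
  qed
  ultimately show ?thesis by (simp add: normal_fan_NC)
qed

lemma nc_zero: "0 \<in> nonneg_comb X"
proof -
  have "finite {} \<and> {} \<subseteq> X \<and> (\<forall>x\<in>{}. (\<lambda>_. 0::real) x \<ge> 0) \<and> 0 = (\<Sum>x\<in>{}. (\<lambda>_. 0::real) x *\<^sub>R x)"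
    by simp
  then show ?thesis unfolding nonneg_comb_def
    by (intro CollectI exI[of _ "{}"] exI[of _ "\<lambda>_. 0::real"])
qed

lemma nc_add:
  assumes "u \<in> nonneg_comb X" "v \<in> nonneg_comb X"
  shows "u + v \<in> nonneg_comb X"
proof -
  obtain S1 c1 where S1: "finite S1" "S1 \<subseteq> X" "\<forall>x\<in>S1. c1 x \<ge> 0" "u = (\<Sum>x\<in>S1. c1 x *\<^sub>R x)"
    using assms(1) unfolding nonneg_comb_def by blast
  obtain S2 c2 where S2: "finite S2" "S2 \<subseteq> X" "\<forall>x\<in>S2. c2 x \<ge> 0" "v = (\<Sum>x\<in>S2. c2 x *\<^sub>R x)"
    using assms(2) unfolding nonneg_comb_def by blast
  define c where "c x = (if x \<in> S1 then c1 x else 0) + (if x \<in> S2 then c2 x else 0)" for x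
  have ce: "c x *\<^sub>R x = (if x \<in> S1 then c1 x *\<^sub>R x else 0) + (if x \<in> S2 then c2 x *\<^sub>R x else 0)" for x
    unfolding c_def by (simp only: scaleR_add_left if_distrib[of "\<lambda>t. t *\<^sub>R x"] scaleR_zero_left)
  have fin: "finite (S1 \<union> S2)" using S1 S2 by simp
  have "(\<Sum>x\<in>S1\<union>S2. c x *\<^sub>R x) = (\<Sum>x\<in>S1\<union>S2. (if x \<in> S1 then c1 x *\<^sub>R x else 0))
           + (\<Sum>x\<in>S1\<union>S2. (if x \<in> S2 then c2 x *\<^sub>R x else 0))"
    unfolding ce by (rule sum.distrib)
  also have "\<dots> = (\<Sum>x\<in>(S1\<union>S2) \<inter> S1. c1 x *\<^sub>R x) + (\<Sum>x\<in>(S1\<union>S2) \<inter> S2. c2 x *\<^sub>R x)"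
    using fin by (simp only: sum.inter_restrict)
  also have "(S1\<union>S2) \<inter> S1 = S1" by blast
  also have "(S1\<union>S2) \<inter> S2 = S2" by blast
  also have "(\<Sum>x\<in>S1. c1 x *\<^sub>R x) + (\<Sum>x\<in>S2. c2 x *\<^sub>R x) = u + v"
    using S1 S2 by simp
  finally have e: "u + v = (\<Sum>x\<in>S1\<union>S2. c x *\<^sub>R x)" by (rule sym)
  have nn: "\<forall>x\<in>S1\<union>S2. c x \<ge> 0" using S1 S2 by (auto simp: c_def)
  have sub: "S1 \<union> S2 \<subseteq> X" using S1 S2 by blast
  show ?thesis unfolding nonneg_comb_def
    by (intro CollectI exI[of _ "S1 \<union> S2"] exI[of _ c] conjI fin sub nn e)
qed

lemma nc_scale:
  assumes "u \<in> nonneg_comb X" "r \<ge> 0"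
  shows "r *\<^sub>R u \<in> nonneg_comb X"
proof -
  obtain S c where S: "finite S" "S \<subseteq> X" "\<forall>x\<in>S. c x \<ge> 0" "u = (\<Sum>x\<in>S. c x *\<^sub>R x)"
    using assms(1) unfolding nonneg_comb_def by blast
  have "r *\<^sub>R u = (\<Sum>x\<in>S. (r * c x) *\<^sub>R x)" by (simp add: S(4) scaleR_sum_right)
  moreover have "\<forall>x\<in>S. r * c x \<ge> 0" using S assms(2) by auto
  ultimately show ?thesis unfolding nonneg_comb_def
    by (intro CollectI exI[of _ S] exI[of _ "\<lambda>x. r * c x"] conjI) (use S in simp_all)
qed

lemma nc_sum:
  assumes "finite I" "\<And>i. i \<in> I \<Longrightarrow> f i \<in> nonneg_comb X"
  shows "(\<Sum>i\<in>I. f i) \<in> nonneg_comb X"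
  using assms by (induction I rule: finite_induct) (auto intro: nc_add nc_zero)

lemma nc_scale_eq:
  assumes "c > 0"
  shows "(\<lambda>x. c *\<^sub>R x) ` nonneg_comb X = nonneg_comb X"
proof
  show "(\<lambda>x. c *\<^sub>R x) ` nonneg_comb X \<subseteq> nonneg_comb X"
  proof clarify
    fix y assume "y \<in> nonneg_comb X"
    then show "c *\<^sub>R y \<in> nonneg_comb X" using assms by (intro nc_scale) auto
  qed
  show "nonneg_comb X \<subseteq> (\<lambda>x. c *\<^sub>R x) ` nonneg_comb X"
  proof
    fix y assume "y \<in> nonneg_comb X"
    then have "(1/c) *\<^sub>R y \<in> nonneg_comb X" using assms by (intro nc_scale) auto
    moreover have "y = c *\<^sub>R ((1/c) *\<^sub>R y)" using assms by simp
    ultimately show "y \<in> (\<lambda>x. c *\<^sub>R x) ` nonneg_comb X" by blast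
  qed
qed

lemma partA:
  fixes C D :: "'a::real_vector set"
  assumes "is_cone C" "is_cone D" "x1 \<noteq> x2" "x1 \<noteq> x3" "x2 \<noteq> x3"
    "collinear {x1, x2, x3}" "x3 \<notin> closed_segment x1 x2"
  shows "homothetic (((+) x1 ` C) \<inter> ((+) x3 ` D)) (((+) x2 ` C) \<inter> ((+) x3 ` D))"
proof -
  obtain Y where DY: "D = nonneg_comb Y" using assms(2) unfolding is_cone_def by blast
  obtain X where CX: "C = nonneg_comb X" using assms(1) unfolding is_cone_def by blast
  obtain u where u: "\<forall>x\<in>{x1,x2,x3}. \<forall>y\<in>{x1,x2,x3}. \<exists>c. x - y = c *\<^sub>R u"
    using assms(6) unfolding collinear_def by blast
  obtain c1 where c1: "x1 - x3 = c1 *\<^sub>R u" using u by blast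
  obtain c2 where c2: "x2 - x3 = c2 *\<^sub>R u" using u by blast
  have c1n: "c1 \<noteq> 0" using c1 assms(4) by auto
  have c2n: "c2 \<noteq> 0" using c2 assms(5) by auto
  have pos: "c1 * c2 > 0"
  proof (rule ccontr)
    assume "\<not> c1 * c2 > 0"
    moreover have "c1 * c2 \<noteq> 0" using c1n c2n by simp
    ultimately have neg: "c1 * c2 < 0" by linarith
    define t where "t = c1 / (c1 - c2)"
    have d: "c1 - c2 \<noteq> 0" using neg by auto
    have t0: "0 \<le> t \<and> t \<le> 1"
    proof (cases "c1 > 0")
      case True
      then have "c2 < 0" using neg by (simp add: mult_less_0_iff)
      then have "c1 - c2 > 0" "c1 \<le> c1 - c2" using True by simp_all
      then show ?thesis unfolding t_def using True
        by (simp add: pos_divide_le_eq divide_nonneg_pos)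
    next
      case False
      then have "c1 < 0" using c1n by simp
      then have "c2 > 0" using neg by (simp add: mult_less_0_iff)
      then have "c1 - c2 < 0" "c1 - c2 \<le> c1" using \<open>c1 < 0\<close> by simp_all
      then show ?thesis unfolding t_def using \<open>c1 < 0\<close>
        by (simp add: neg_divide_le_eq divide_nonpos_neg)
    qed
    have "x3 = (1 - t) *\<^sub>R x1 + t *\<^sub>R x2"
    proof -
      have "(1 - t) *\<^sub>R x1 + t *\<^sub>R x2 = x1 + t *\<^sub>R (x2 - x1)" by (simp add: algebra_simps)
      also have "x2 - x1 = (c2 - c1) *\<^sub>R u" using c1 c2
      proof -
        have "x2 - x1 = (x2 - x3) - (x1 - x3)" by simp
        then show ?thesis using c1 c2 by (simp add: scaleR_left_diff_distrib)
      qed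
      also have "t *\<^sub>R ((c2 - c1) *\<^sub>R u) = (- c1) *\<^sub>R u"
      proof -
        have "t * (c2 - c1) = - c1" unfolding t_def using d by (simp add: field_simps)
        then show ?thesis by (simp only: scaleR_scaleR)
      qed
      also have "x1 + (- c1) *\<^sub>R u = x1 - (x1 - x3)" by (simp add: c1)
      finally show ?thesis by simp
    qed
    then have "x3 \<in> closed_segment x1 x2" unfolding in_segment(1) using t0 by blast
    then show False using assms(7) by simp
  qed
  define c where "c = c1 / c2"
  have cpos: "c > 0" unfolding c_def using pos
    by (simp add: zero_less_divide_iff zero_less_mult_iff)
  have rel: "x1 - x3 = c *\<^sub>R (x2 - x3)"
  proof -
    have "c *\<^sub>R (x2 - x3) = (c * c2) *\<^sub>R u" by (simp only: c2 scaleR_scaleR)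
    also have "c * c2 = c1" unfolding c_def using c2n by simp
    finally show ?thesis using c1 by simp
  qed
  define h where "h y = (1 - c) *\<^sub>R x3 + c *\<^sub>R y" for y
  have inj: "inj h"
  proof (rule injI)
    fix x y assume "h x = h y"
    then have "c *\<^sub>R x = c *\<^sub>R y" unfolding h_def by simp
    then show "x = y" using cpos by simp
  qed
  have key: "(1 - c) *\<^sub>R x3 + c *\<^sub>R (x2 + y) = x1 + c *\<^sub>R y" for y
  proof -
    have "(1 - c) *\<^sub>R x3 + c *\<^sub>R (x2 + y) = x3 + c *\<^sub>R (x2 - x3) + c *\<^sub>R y"
      by (simp add: algebra_simps)
    also have "\<dots> = x1 + c *\<^sub>R y" unfolding rel[symmetric] by simp
    finally show ?thesis .
  qed
  have h1: "h ` ((+) x2 ` C) = (+) x1 ` C"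
  proof -
    have "h ` ((+) x2 ` C) = (+) x1 ` ((\<lambda>y. c *\<^sub>R y) ` C)"
      unfolding image_image h_def
      by (rule image_cong[OF refl]) (rule key)
    then show ?thesis by (simp only: CX nc_scale_eq[OF cpos])
  qed
  have h2: "h ` ((+) x3 ` D) = (+) x3 ` ((\<lambda>y. c *\<^sub>R y) ` D)"
    unfolding image_image h_def by (rule image_cong[OF refl]) (simp add: algebra_simps)
  have h2': "h ` ((+) x3 ` D) = (+) x3 ` D" unfolding h2 by (simp only: DY nc_scale_eq[OF cpos])
  have eq: "h ` (((+) x2 ` C) \<inter> ((+) x3 ` D)) = ((+) x1 ` C) \<inter> ((+) x3 ` D)"
    unfolding image_Int[OF inj] h1 h2' ..
  have hh: "h = (\<lambda>x. (1 - c) *\<^sub>R x3 + c *\<^sub>R x)" by (rule ext) (simp only: h_def)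
  show ?thesis unfolding homothetic_def
  proof (intro exI conjI)
    show "0 < c" by (rule cpos)
    show "((+) x1 ` C) \<inter> ((+) x3 ` D) = (\<lambda>x. (1 - c) *\<^sub>R x3 + c *\<^sub>R x) ` (((+) x2 ` C) \<inter> ((+) x3 ` D))"
      using eq unfolding hh by (rule sym)
  qed
qed

lemma sum_split_k:
  fixes f :: "'n::finite \<Rightarrow> real"
  shows "(\<Sum>i\<in>UNIV. f i) = f k + (\<Sum>j\<in>-{k}. f j)"
proof -
  have "(\<Sum>i\<in>UNIV. f i) = f k + (\<Sum>j\<in>UNIV-{k}. f j)" by (rule sum.remove) auto
  then show ?thesis by (simp add: Compl_eq_Diff_UNIV)
qed

lemma axis_comp: "(axis i (1::real) :: real^'n) $ j = (if j = i then 1 else 0)"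
  by (simp add: axis_def)

lemma l1_axis: "(\<Sum>j\<in>UNIV. \<bar>(axis i (1::real) :: real^'n::finite) $ j\<bar>) = 1"
  by (simp add: axis_comp if_distrib[of abs] cong: if_cong)

lemma l1_convex: "convex {p::real^'n::finite. (\<Sum>i\<in>UNIV. \<bar>p$i\<bar>) \<le> 1}"
  unfolding convex_def
proof (clarify)
  fix x y :: "real^'n" and u v :: real
  assume x: "(\<Sum>i\<in>UNIV. \<bar>x$i\<bar>) \<le> 1" and y: "(\<Sum>i\<in>UNIV. \<bar>y$i\<bar>) \<le> 1"
    and u: "0 \<le> u" and v: "0 \<le> v" and uv: "u + v = 1"
  have "(\<Sum>i\<in>UNIV. \<bar>(u *\<^sub>R x + v *\<^sub>R y)$i\<bar>) \<le> (\<Sum>i\<in>UNIV. u * \<bar>x$i\<bar> + v * \<bar>y$i\<bar>)"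
  proof (rule sum_mono)
    fix i
    have "\<bar>u * x$i + v * y$i\<bar> \<le> \<bar>u * x$i\<bar> + \<bar>v * y$i\<bar>" by (rule abs_triangle_ineq)
    also have "\<dots> = u * \<bar>x$i\<bar> + v * \<bar>y$i\<bar>" using u v by (simp add: abs_mult)
    finally show "\<bar>(u *\<^sub>R x + v *\<^sub>R y)$i\<bar> \<le> u * \<bar>x$i\<bar> + v * \<bar>y$i\<bar>" by simp
  qed
  also have "\<dots> = u * (\<Sum>i\<in>UNIV. \<bar>x$i\<bar>) + v * (\<Sum>i\<in>UNIV. \<bar>y$i\<bar>)"
    by (simp add: sum.distrib sum_distrib_left)
  also have "\<dots> \<le> u * 1 + v * 1"
    using x y u v by (intro add_mono mult_left_mono) auto
  finally show "(\<Sum>i\<in>UNIV. \<bar>(u *\<^sub>R x + v *\<^sub>R y)$i\<bar>) \<le> 1" using uv by simp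
qed

lemma cp_sub: "(cross_polytope :: (real^'n::finite) set) \<subseteq> {p. (\<Sum>i\<in>UNIV. \<bar>p$i\<bar>) \<le> 1}"
  unfolding cross_polytope_def
proof (rule hull_minimal)
  show "(\<Union>i. {axis i 1, - axis i 1}) \<subseteq> {p::real^'n. (\<Sum>i\<in>UNIV. \<bar>p$i\<bar>) \<le> 1}"
    by (auto simp: l1_axis)
  show "convex {p::real^'n. (\<Sum>i\<in>UNIV. \<bar>p$i\<bar>) \<le> 1}" by (rule l1_convex)
qed

lemma convex_sum_le1:
  fixes S :: "'a::real_vector set"
  assumes "convex S" "0 \<in> S" "finite I" "\<And>i. i \<in> I \<Longrightarrow> u i \<in> S"
    "\<And>i. i \<in> I \<Longrightarrow> c i \<ge> 0" "(\<Sum>i\<in>I. c i) \<le> 1"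
  shows "(\<Sum>i\<in>I. c i *\<^sub>R u i) \<in> S"
proof (cases "(\<Sum>i\<in>I. c i) = 0")
  case True
  then have "\<forall>i\<in>I. c i = 0" using sum_nonneg_eq_0_iff[OF assms(3)] assms(5) by blast
  then have "(\<Sum>i\<in>I. c i *\<^sub>R u i) = 0" by simp
  then show ?thesis using assms(2) by simp
next
  case False
  define C where "C = (\<Sum>i\<in>I. c i)"
  have Cpos: "C > 0" using False assms(5) sum_nonneg[of I c] unfolding C_def by force
  have in1: "(\<Sum>i\<in>I. (c i / C) *\<^sub>R u i) \<in> S"
  proof (rule convex_sum[OF assms(3) assms(1)])
    show "(\<Sum>i\<in>I. c i / C) = 1" using Cpos unfolding C_def by (simp add: sum_divide_distrib[symmetric])
    show "\<And>i. i \<in> I \<Longrightarrow> 0 \<le> c i / C" using assms(5) Cpos by simp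
    show "\<And>i. i \<in> I \<Longrightarrow> u i \<in> S" by (rule assms(4))
  qed
  have "C *\<^sub>R (\<Sum>i\<in>I. (c i / C) *\<^sub>R u i) + (1 - C) *\<^sub>R 0 \<in> S"
    by (rule convexD[OF assms(1) in1 assms(2)]) (use Cpos assms(6) C_def in auto)
  moreover have "C *\<^sub>R (\<Sum>i\<in>I. (c i / C) *\<^sub>R u i) = (\<Sum>i\<in>I. c i *\<^sub>R u i)"
    using Cpos by (simp add: scaleR_sum_right)
  ultimately show ?thesis by simp
qed

lemma cp_sup: "{p. (\<Sum>i\<in>UNIV. \<bar>p$i\<bar>) \<le> 1} \<subseteq> (cross_polytope :: (real^'n::finite) set)"
proof
  fix p :: "real^'n" assume p: "p \<in> {p. (\<Sum>i\<in>UNIV. \<bar>p$i\<bar>) \<le> 1}"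
  have cv: "convex (cross_polytope :: (real^'n) set)"
    unfolding cross_polytope_def by (rule convex_convex_hull)
  have gen: "axis i 1 \<in> (cross_polytope :: (real^'n) set)" "- axis i 1 \<in> (cross_polytope :: (real^'n) set)" for i
    unfolding cross_polytope_def by (auto intro: hull_inc)
  have zero: "0 \<in> (cross_polytope :: (real^'n) set)"
  proof -
    have "(1/2::real) *\<^sub>R axis k 1 + (1/2::real) *\<^sub>R (- axis k 1) \<in> (cross_polytope :: (real^'n) set)"
      by (rule convexD[OF cv gen(1) gen(2)]) auto
    then show ?thesis by simp
  qed
  have sg: "sgn (p$i) *\<^sub>R axis i 1 \<in> (cross_polytope :: (real^'n) set)" for i
  proof -
    consider "p$i > 0" | "p$i < 0" | "p$i = 0" by linarith
    then show ?thesis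
    proof cases
      case 1 then show ?thesis using gen(1)[of i] by simp
    next
      case 2 then show ?thesis using gen(2)[of i] by simp
    next
      case 3 then show ?thesis using zero by simp
    qed
  qed
  have "(\<Sum>i\<in>UNIV. \<bar>p$i\<bar> *\<^sub>R (sgn (p$i) *\<^sub>R axis i 1)) \<in> (cross_polytope :: (real^'n) set)"
    by (rule convex_sum_le1[OF cv zero]) (use sg p in auto)
  moreover have "(\<Sum>i\<in>UNIV. \<bar>p$i\<bar> *\<^sub>R (sgn (p$i) *\<^sub>R axis i 1)) = p"
  unfolding vec_eq_iff
  proof
    fix j
    have "(\<Sum>i\<in>UNIV. \<bar>p$i\<bar> *\<^sub>R (sgn (p$i) *\<^sub>R axis i (1::real))) $ j
        = (\<Sum>x\<in>UNIV. \<bar>p $ x\<bar> * sgn (p $ x) * (if j = x then 1 else 0))"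
      by (simp add: axis_comp)
    also have "\<dots> = (\<Sum>x\<in>UNIV. (if j = x then \<bar>p $ x\<bar> * sgn (p $ x) else 0))"
      by (rule sum.cong) auto
    also have "\<dots> = \<bar>p$j\<bar> * sgn (p$j)" by simp
    also have "\<dots> = p$j" by (simp add: abs_mult_sgn)
    finally show "(\<Sum>i\<in>UNIV. \<bar>p$i\<bar> *\<^sub>R (sgn (p$i) *\<^sub>R axis i 1)) $ j = p $ j" .
  qed
  ultimately show "p \<in> cross_polytope" by simp
qed

lemma cp_l1: "(cross_polytope :: (real^'n::finite) set) = {p. (\<Sum>i\<in>UNIV. \<bar>p$i\<bar>) \<le> 1}"
  using cp_sub cp_sup by blast

lemma sigma_le: "(\<sigma>::real) = 1 \<or> \<sigma> = -1 \<Longrightarrow> \<sigma> * x \<le> \<bar>x\<bar>"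
  by auto

lemma l1_scaled_axis:
  "(\<Sum>i\<in>UNIV. \<bar>(a *\<^sub>R axis j (1::real) :: real^'n::finite)$i\<bar>) = \<bar>a\<bar>"
proof -
  have "\<And>i. \<bar>(a *\<^sub>R axis j (1::real) :: real^'n)$i\<bar> = (if i = j then \<bar>a\<bar> else 0)"
    by (simp add: axis_comp)
  then show ?thesis by simp
qed

lemma gen_f:
  fixes k :: "'n::finite" and p :: "real^'n"
  assumes s: "\<sigma> = 1 \<or> \<sigma> = -1" and p: "p \<in> cross_polytope"
  shows "\<sigma> * (p - \<sigma> *\<^sub>R axis k 1)$k + (\<Sum>j\<in>-{k}. \<bar>(p - \<sigma> *\<^sub>R axis k 1)$j\<bar>) \<le> 0"
proof -
  have a: "(\<Sum>i\<in>UNIV. \<bar>p$i\<bar>) \<le> 1" using p by (simp add: cp_l1)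
  have l1: "\<bar>p$k\<bar> + (\<Sum>j\<in>-{k}. \<bar>p$j\<bar>) \<le> 1"
    using a sum_split_k[of "\<lambda>i. \<bar>p$i\<bar>" k] by linarith
  have "(\<Sum>j\<in>-{k}. \<bar>(p - \<sigma> *\<^sub>R axis k 1)$j\<bar>) = (\<Sum>j\<in>-{k}. \<bar>p$j\<bar>)"
    by (rule sum.cong) (auto simp: axis_comp)
  moreover have "\<sigma> * (p - \<sigma> *\<^sub>R axis k 1)$k = \<sigma> * p$k - \<sigma> * \<sigma>" by (simp add: algebra_simps)
  moreover have "\<sigma> * \<sigma> = 1" using s by auto
  moreover have "\<sigma> * p$k \<le> \<bar>p$k\<bar>" using s by auto
  ultimately show ?thesis using l1 by linarith
qed

lemma cone_sub:
  fixes k :: "'n::finite"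
  assumes s: "\<sigma> = 1 \<or> \<sigma> = -1"
  shows "nonneg_comb ((\<lambda>y. y - \<sigma> *\<^sub>R axis k 1) ` (cross_polytope :: (real^'n) set))
         \<subseteq> {y. \<sigma> * y$k + (\<Sum>j\<in>-{k}. \<bar>y$j\<bar>) \<le> 0}"
proof
  fix y assume "y \<in> nonneg_comb ((\<lambda>y. y - \<sigma> *\<^sub>R axis k 1) ` (cross_polytope :: (real^'n) set))"
  then obtain S c where S: "finite S" "S \<subseteq> (\<lambda>y. y - \<sigma> *\<^sub>R axis k 1) ` (cross_polytope :: (real^'n) set)"
    "\<forall>u\<in>S. c u \<ge> 0" and y: "y = (\<Sum>u\<in>S. c u *\<^sub>R u)"
    unfolding nonneg_comb_def by blast
  have fu: "\<sigma> * u$k + (\<Sum>j\<in>-{k}. \<bar>u$j\<bar>) \<le> 0" if uS: "u \<in> S" for u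
  proof -
    obtain p where "p \<in> cross_polytope" "u = p - \<sigma> *\<^sub>R axis k 1" using S uS by auto
    then show ?thesis using gen_f[OF s] by blast
  qed
  have yc: "y$i = (\<Sum>u\<in>S. c u * u$i)" for i by (simp add: y)
  have "(\<Sum>j\<in>-{k}. \<bar>y$j\<bar>) \<le> (\<Sum>j\<in>-{k}. \<Sum>u\<in>S. c u * \<bar>u$j\<bar>)"
  proof (rule sum_mono)
    fix j
    have "\<bar>y$j\<bar> \<le> (\<Sum>u\<in>S. \<bar>c u * u$j\<bar>)" unfolding yc by (rule sum_abs)
    also have "\<dots> = (\<Sum>u\<in>S. c u * \<bar>u$j\<bar>)" using S(3) by (intro sum.cong) (auto simp: abs_mult)
    finally show "\<bar>y$j\<bar> \<le> (\<Sum>u\<in>S. c u * \<bar>u$j\<bar>)" .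
  qed
  also have "\<dots> = (\<Sum>u\<in>S. c u * (\<Sum>j\<in>-{k}. \<bar>u$j\<bar>))"
    by (subst sum.swap) (simp add: sum_distrib_left)
  finally have "\<sigma> * y$k + (\<Sum>j\<in>-{k}. \<bar>y$j\<bar>) \<le> (\<Sum>u\<in>S. c u * (\<sigma> * u$k + (\<Sum>j\<in>-{k}. \<bar>u$j\<bar>)))"
    by (simp add: yc sum_distrib_left distrib_left sum.distrib algebra_simps)
  also have "\<dots> \<le> 0"
    by (rule sum_nonpos) (use S(3) fu in \<open>auto intro: mult_nonneg_nonpos\<close>)
  finally show "y \<in> {y. \<sigma> * y$k + (\<Sum>j\<in>-{k}. \<bar>y$j\<bar>) \<le> 0}" by simp
qed

lemma cone_sup:
  fixes k :: "'n::finite"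
  assumes s: "\<sigma> = 1 \<or> \<sigma> = -1"
  shows "{y. \<sigma> * y$k + (\<Sum>j\<in>-{k}. \<bar>y$j\<bar>) \<le> 0} \<subseteq>
         nonneg_comb ((\<lambda>y. y - \<sigma> *\<^sub>R axis k 1) ` (cross_polytope :: (real^'n) set))"
proof
  fix y :: "real^'n" assume "y \<in> {y. \<sigma> * y$k + (\<Sum>j\<in>-{k}. \<bar>y$j\<bar>) \<le> 0}"
  then have fy: "\<sigma> * y$k + (\<Sum>j\<in>-{k}. \<bar>y$j\<bar>) \<le> 0" by simp
  define X where "X = (\<lambda>y. y - \<sigma> *\<^sub>R axis k 1) ` (cross_polytope :: (real^'n) set)"
  define g where "g j = sgn (y$j) *\<^sub>R axis j (1::real) - \<sigma> *\<^sub>R axis k 1" for j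
  define h where "h = (- \<sigma> *\<^sub>R axis k (1::real)) - \<sigma> *\<^sub>R axis k 1"
  have ss: "\<bar>\<sigma>\<bar> = 1" using s by auto
  have gX: "g j \<in> X" for j
  proof -
    have "(\<Sum>i\<in>UNIV. \<bar>(sgn (y$j) *\<^sub>R axis j (1::real) :: real^'n)$i\<bar>) = \<bar>sgn (y$j)\<bar>"
      by (rule l1_scaled_axis)
    also have "\<dots> \<le> 1" by (simp add: abs_sgn_eq)
    finally have "sgn (y$j) *\<^sub>R axis j 1 \<in> (cross_polytope :: (real^'n) set)" by (simp add: cp_l1)
    then show ?thesis unfolding X_def g_def by (rule image_eqI[rotated]) simp
  qed
  have hX: "h \<in> X"
  proof -
    have "(\<Sum>i\<in>UNIV. \<bar>((- \<sigma>) *\<^sub>R axis k (1::real) :: real^'n)$i\<bar>) = \<bar>\<sigma>\<bar>"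
      using l1_scaled_axis[of "- \<sigma>" k] by simp
    then have "(- \<sigma>) *\<^sub>R axis k 1 \<in> (cross_polytope :: (real^'n) set)" using ss by (simp add: cp_l1)
    then show ?thesis unfolding X_def h_def by (rule image_eqI[rotated]) simp
  qed
  define F where "F = \<sigma> * y$k + (\<Sum>j\<in>-{k}. \<bar>y$j\<bar>)"
  have eq: "y = (\<Sum>j\<in>-{k}. \<bar>y$j\<bar> *\<^sub>R g j) + (- F / 2) *\<^sub>R h"
    unfolding vec_eq_iff
  proof
    fix i
    show "y$i = ((\<Sum>j\<in>-{k}. \<bar>y$j\<bar> *\<^sub>R g j) + (- F / 2) *\<^sub>R h) $ i"
    proof (cases "i = k")
      case True
      have "((\<Sum>j\<in>-{k}. \<bar>y$j\<bar> *\<^sub>R g j) + (- F / 2) *\<^sub>R h) $ i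
          = (\<Sum>j\<in>-{k}. \<bar>y$j\<bar> * (- \<sigma>)) + (- F / 2) * (- 2 * \<sigma>)"
        using True by (simp add: g_def h_def axis_comp)
      also have "\<dots> = - \<sigma> * (\<Sum>j\<in>-{k}. \<bar>y$j\<bar>) + \<sigma> * F"
        by (simp add: sum_distrib_left sum_negf algebra_simps)
      also have "\<dots> = (\<sigma> * \<sigma>) * y$k" unfolding F_def by (simp add: algebra_simps)
      also have "\<sigma> * \<sigma> = 1" using s by auto
      finally show ?thesis using True by simp
    next
      case False
      have "((\<Sum>j\<in>-{k}. \<bar>y$j\<bar> *\<^sub>R g j) + (- F / 2) *\<^sub>R h) $ i
          = (\<Sum>x\<in>- {k}. \<bar>y $ x\<bar> * (sgn (y $ x) * (if i = x then 1 else 0)))"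
        using False by (simp add: g_def h_def axis_comp)
      also have "\<dots> = (\<Sum>j\<in>-{k}. (if i = j then \<bar>y$j\<bar> * sgn (y$j) else 0))"
        by (rule sum.cong) auto
      also have "\<dots> = \<bar>y$i\<bar> * sgn (y$i)" using False by (simp add: sum.delta)
      also have "\<dots> = y$i" by (simp add: abs_mult_sgn)
      finally show ?thesis by simp
    qed
  qed
  have "(\<Sum>j\<in>-{k}. \<bar>y$j\<bar> *\<^sub>R g j) + (- F / 2) *\<^sub>R h \<in> nonneg_comb X"
  proof (rule nc_add)
    show "(\<Sum>j\<in>-{k}. \<bar>y$j\<bar> *\<^sub>R g j) \<in> nonneg_comb X"
      by (rule nc_sum) (auto intro!: nc_scale[OF nc_base[OF gX]])
    show "(- F / 2) *\<^sub>R h \<in> nonneg_comb X"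
      using fy unfolding F_def by (intro nc_scale nc_base hX) auto
  qed
  then show "y \<in> nonneg_comb X" using eq by simp
qed

lemma cone_char:
  fixes k :: "'n::finite"
  assumes s: "\<sigma> = 1 \<or> \<sigma> = -1"
  shows "nonneg_comb ((\<lambda>y. y - \<sigma> *\<^sub>R axis k 1) ` (cross_polytope :: (real^'n) set))
         = {y. \<sigma> * y$k + (\<Sum>j\<in>-{k}. \<bar>y$j\<bar>) \<le> 0}"
  using cone_sub[OF s] cone_sup[OF s] by (rule subset_antisym)

lemma trans_set:
  fixes w :: "'a::ab_group_add"
  shows "(+) w ` K = {x. x - w \<in> K}"
proof
  show "(+) w ` K \<subseteq> {x. x - w \<in> K}" by auto
  show "{x. x - w \<in> K} \<subseteq> (+) w ` K"
  proof
    fix x assume "x \<in> {x. x - w \<in> K}"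
    then have "x - w \<in> K" by simp
    moreover have "x = w + (x - w)" by simp
    ultimately show "x \<in> (+) w ` K" by (rule rev_image_eqI)
  qed
qed

lemma cone1:
  fixes k :: "'n::finite"
  shows "nonneg_comb ((\<lambda>y. y - axis k 1) ` (cross_polytope :: (real^'n) set))
         = {y. y$k + (\<Sum>j\<in>-{k}. \<bar>y$j\<bar>) \<le> 0}"
  using cone_char[of 1 k] by simp

lemma cone2:
  fixes k :: "'n::finite"
  shows "nonneg_comb ((\<lambda>y. y + axis k 1) ` (cross_polytope :: (real^'n) set))
         = {y. - y$k + (\<Sum>j\<in>-{k}. \<bar>y$j\<bar>) \<le> 0}"
proof -
  have "(\<lambda>y. y + axis k 1) = (\<lambda>y::real^'n. y - (-1::real) *\<^sub>R axis k 1)" by (rule ext) simp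
  then show ?thesis using cone_char[of "-1" k] by simp
qed

definition Pset :: "'n::finite \<Rightarrow> real^'n \<Rightarrow> real \<Rightarrow> (real^'n) set" where
  "Pset k z t = ((+) (axis k 1) ` nonneg_comb ((\<lambda>y. y - axis k 1) ` cross_polytope))
     \<inter> ((+) (t *\<^sub>R z - axis k 1) ` nonneg_comb ((\<lambda>y. y + axis k 1) ` cross_polytope))"

lemma Pchar:
  fixes k :: "'n::finite"
  shows "Pset k z t = {x. x$k - 1 + (\<Sum>j\<in>-{k}. \<bar>x$j\<bar>) \<le> 0 \<and>
     - (x$k - (t * z$k - 1)) + (\<Sum>j\<in>-{k}. \<bar>x$j - t * z$j\<bar>) \<le> 0}"
proof -
  have s1: "(\<Sum>j\<in>-{k}. \<bar>(x - axis k 1)$j\<bar>) = (\<Sum>j\<in>-{k}. \<bar>x$j\<bar>)" for x :: "real^'n"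
    by (rule sum.cong) (auto simp: axis_comp)
  have s2: "(\<Sum>j\<in>-{k}. \<bar>(x - (t *\<^sub>R z - axis k 1))$j\<bar>) = (\<Sum>j\<in>-{k}. \<bar>x$j - t * z$j\<bar>)" for x :: "real^'n"
    by (rule sum.cong) (auto simp: axis_comp)
  show ?thesis unfolding Pset_def trans_set cone1 cone2
    using s1 s2 by (auto simp: axis_comp)
qed

definition vv :: "'n::finite \<Rightarrow> real^'n \<Rightarrow> 'n \<Rightarrow> real^'n" where
  "vv k z j = (if j = k then 0 else z$j *\<^sub>R axis j 1 - \<bar>z$j\<bar> *\<^sub>R axis k 1)"

definition T0 :: "'n::finite \<Rightarrow> real^'n \<Rightarrow> (real^'n) set" where
  "T0 k z = (\<lambda>\<mu>. \<Sum>j\<in>UNIV. (\<mu>$j) *\<^sub>R vv k z j) ` cbox 0 1"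

lemma qcomp:
  fixes k :: "'n::finite"
  shows "(\<Sum>j\<in>UNIV. (\<mu>$j) *\<^sub>R vv k z j) $ i =
     (if i = k then - (\<Sum>j\<in>-{k}. \<mu>$j * \<bar>z$j\<bar>) else \<mu>$i * z$i)"
proof -
  have "(\<Sum>j\<in>UNIV. (\<mu>$j) *\<^sub>R vv k z j) $ i = (\<Sum>j\<in>UNIV. \<mu>$j * (vv k z j $ i))" by simp
  also have "\<dots> = \<mu>$k * (vv k z k $ i) + (\<Sum>j\<in>-{k}. \<mu>$j * (vv k z j $ i))"
    by (rule sum_split_k)
  also have "\<dots> = (\<Sum>j\<in>-{k}. \<mu>$j * (vv k z j $ i))" by (simp add: vv_def)
  also have "\<dots> = (\<Sum>j\<in>-{k}. (if i = k then - (\<mu>$j * \<bar>z$j\<bar>) else (if j = i then \<mu>$i * z$i else 0)))"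
    by (rule sum.cong) (auto simp: vv_def axis_comp)
  also have "\<dots> = (if i = k then - (\<Sum>j\<in>-{k}. \<mu>$j * \<bar>z$j\<bar>) else \<mu>$i * z$i)"
    by (cases "i = k") (simp_all add: sum_negf)
  finally show ?thesis .
qed

lemma clamp:
  fixes x b :: real
  defines "m \<equiv> max 0 (min 1 (x / b))"
  defines "d \<equiv> x - m * b"
  shows "0 \<le> m" "m \<le> 1" "\<bar>x\<bar> = m * \<bar>b\<bar> + \<bar>d\<bar>" "\<bar>x - b\<bar> = (1 - m) * \<bar>b\<bar> + \<bar>d\<bar>"
proof -
  show "0 \<le> m" "m \<le> 1" unfolding m_def by auto
  have "\<bar>x\<bar> = m * \<bar>b\<bar> + \<bar>d\<bar> \<and> \<bar>x - b\<bar> = (1 - m) * \<bar>b\<bar> + \<bar>d\<bar>"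
  proof (cases "b = 0")
    case True
    then show ?thesis unfolding d_def m_def by simp
  next
    case bn: False
    consider "x / b \<le> 0" | "x / b \<ge> 1" | "0 < x / b \<and> x / b < 1" by linarith
    then show ?thesis
    proof cases
      case 1
      then have m0: "m = 0" unfolding m_def by simp
      have "(x \<le> 0 \<and> b > 0) \<or> (x \<ge> 0 \<and> b < 0)" using 1 bn
        by (auto simp: divide_le_0_iff)
      then show ?thesis using m0 unfolding d_def by auto
    next
      case 2
      then have m1: "m = 1" unfolding m_def by simp
      have "(x \<ge> b \<and> b > 0) \<or> (x \<le> b \<and> b < 0)" using 2 bn
        by (cases "b > 0") (auto simp: le_divide_eq)
      then show ?thesis using m1 unfolding d_def by auto
    next
      case 3
      then have mx: "m = x / b" unfolding m_def by simp
      then have d0: "d = 0" unfolding d_def using bn by simp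
      have "(0 < x \<and> x < b) \<or> (b < x \<and> x < 0)" using 3 bn
        by (cases "b > 0") (auto simp: divide_less_eq less_divide_eq zero_less_divide_iff)
      then show ?thesis using mx d0 bn by (auto simp: field_simps)
    qed
  qed
  then show "\<bar>x\<bar> = m * \<bar>b\<bar> + \<bar>d\<bar>" "\<bar>x - b\<bar> = (1 - m) * \<bar>b\<bar> + \<bar>d\<bar>" by auto
qed

definition sval :: "'n::finite \<Rightarrow> real^'n \<Rightarrow> real \<Rightarrow> real" where
  "sval k z t = 2 - t * (z$k + (\<Sum>j\<in>-{k}. \<bar>z$j\<bar>))"

definition Qset :: "'n::finite \<Rightarrow> real^'n \<Rightarrow> real \<Rightarrow> (real^'n) set" where
  "Qset k z t = (\<lambda>(p,q). (1 - sval k z t / 2) *\<^sub>R axis k 1 + (sval k z t / 2) *\<^sub>R p + t *\<^sub>R q)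
      ` (cross_polytope \<times> T0 k z)"

lemma Q_sub_P:
  fixes k :: "'n::finite"
  assumes t: "t > 0" and s: "sval k z t > 0"
  shows "Qset k z t \<subseteq> Pset k z t"
proof
  fix x assume "x \<in> Qset k z t"
  then obtain p \<mu> where p: "p \<in> cross_polytope" and mu: "\<mu> \<in> cbox 0 (1::real^'n)"
    and x: "x = (1 - sval k z t / 2) *\<^sub>R axis k 1 + (sval k z t / 2) *\<^sub>R p
               + t *\<^sub>R (\<Sum>j\<in>UNIV. (\<mu>$j) *\<^sub>R vv k z j)"
    unfolding Qset_def T0_def by auto
  define s where "s = sval k z t"
  define Zs where "Zs = (\<Sum>j\<in>-{k}. \<bar>z$j\<bar>)"
  define Sm where "Sm = (\<Sum>j\<in>-{k}. \<mu>$j * \<bar>z$j\<bar>)"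
  define PP where "PP = (\<Sum>j\<in>-{k}. \<bar>p$j\<bar>)"
  have sdef: "s = 2 - t * z$k - t * Zs" unfolding s_def sval_def Zs_def by (simp add: algebra_simps)
  have s0: "s > 0" using s s_def by simp
  have m01: "0 \<le> \<mu>$j" "\<mu>$j \<le> 1" for j using mu by (auto simp: mem_box_cart)
  have pl1: "\<bar>p$k\<bar> + PP \<le> 1"
  proof -
    have a: "(\<Sum>i\<in>UNIV. \<bar>p$i\<bar>) \<le> 1" using p by (simp add: cp_l1)
    then show ?thesis unfolding PP_def using sum_split_k[of "\<lambda>i. \<bar>p$i\<bar>" k] by linarith
  qed
  have xk: "x$k = (1 - s/2) + (s/2) * p$k - t * Sm"
    unfolding x s_def Sm_def by (simp add: qcomp del: sum_component)
  have xj: "x$j = (s/2) * p$j + t * (\<mu>$j * z$j)" if "j \<noteq> k" for j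
    unfolding x s_def using that by (simp add: qcomp axis_comp del: sum_component)
  have top: "(\<Sum>j\<in>-{k}. \<bar>x$j\<bar>) \<le> (s/2) * PP + t * Sm"
  proof -
    have "(\<Sum>j\<in>-{k}. \<bar>x$j\<bar>) \<le> (\<Sum>j\<in>-{k}. (s/2) * \<bar>p$j\<bar> + t * (\<mu>$j * \<bar>z$j\<bar>))"
    proof (rule sum_mono)
      fix j assume "j \<in> -{k}"
      then have "\<bar>x$j\<bar> = \<bar>(s/2) * p$j + t * (\<mu>$j * z$j)\<bar>" using xj by simp
      also have "\<dots> \<le> \<bar>(s/2) * p$j\<bar> + \<bar>t * (\<mu>$j * z$j)\<bar>" by (rule abs_triangle_ineq)
      also have "\<dots> = (s/2) * \<bar>p$j\<bar> + t * (\<mu>$j * \<bar>z$j\<bar>)"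
        using s0 t m01[of j] by (simp add: abs_mult)
      finally show "\<bar>x$j\<bar> \<le> (s/2) * \<bar>p$j\<bar> + t * (\<mu>$j * \<bar>z$j\<bar>)" .
    qed
    also have "\<dots> = (s/2) * PP + t * Sm"
      unfolding PP_def Sm_def by (simp add: sum.distrib sum_distrib_left)
    finally show ?thesis .
  qed
  have bot: "(\<Sum>j\<in>-{k}. \<bar>x$j - t * z$j\<bar>) \<le> (s/2) * PP + t * Zs - t * Sm"
  proof -
    have "(\<Sum>j\<in>-{k}. \<bar>x$j - t * z$j\<bar>) \<le> (\<Sum>j\<in>-{k}. (s/2) * \<bar>p$j\<bar> + (t * \<bar>z$j\<bar> - t * (\<mu>$j * \<bar>z$j\<bar>)))"
    proof (rule sum_mono)
      fix j assume "j \<in> -{k}"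
      then have "\<bar>x$j - t * z$j\<bar> = \<bar>(s/2) * p$j + (- (t * (1 - \<mu>$j))) * z$j\<bar>"
        using xj by (simp add: algebra_simps)
      also have "\<dots> \<le> \<bar>(s/2) * p$j\<bar> + \<bar>(- (t * (1 - \<mu>$j))) * z$j\<bar>" by (rule abs_triangle_ineq)
      also have "\<dots> = (s/2) * \<bar>p$j\<bar> + (t * (1 - \<mu>$j)) * \<bar>z$j\<bar>"
        using s0 t m01[of j] by (simp add: abs_mult)
      also have "\<dots> = (s/2) * \<bar>p$j\<bar> + (t * \<bar>z$j\<bar> - t * (\<mu>$j * \<bar>z$j\<bar>))"
        by (simp add: algebra_simps)
      finally show "\<bar>x$j - t * z$j\<bar> \<le> (s/2) * \<bar>p$j\<bar> + (t * \<bar>z$j\<bar> - t * (\<mu>$j * \<bar>z$j\<bar>))" .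
    qed
    also have "\<dots> = (s/2) * PP + t * Zs - t * Sm"
      unfolding PP_def Sm_def Zs_def by (simp add: sum.distrib sum_distrib_left sum_subtractf)
    finally show ?thesis .
  qed
  have e1: "(s/2) * (p$k + PP - 1) \<le> 0"
    using s0 pl1 by (intro mult_nonneg_nonpos) auto
  have e2: "(s/2) * (- p$k + PP - 1) \<le> 0"
    using s0 pl1 by (intro mult_nonneg_nonpos) auto
  have e1': "(s/2) * p$k + (s/2) * PP - s/2 \<le> 0" using e1 by (simp add: algebra_simps)
  have e2': "- ((s/2) * p$k) + (s/2) * PP - s/2 \<le> 0" using e2 by (simp add: algebra_simps)
  have c1: "x$k - 1 + (\<Sum>j\<in>-{k}. \<bar>x$j\<bar>) \<le> 0"
    using top xk e1' by linarith
  have c2: "- (x$k - (t * z$k - 1)) + (\<Sum>j\<in>-{k}. \<bar>x$j - t * z$j\<bar>) \<le> 0"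
    using bot xk e2' sdef by linarith
  show "x \<in> Pset k z t" unfolding Pchar using c1 c2 by simp
qed

lemma P_sub_Q:
  fixes k :: "'n::finite"
  assumes t: "t > 0" and s: "sval k z t > 0"
  shows "Pset k z t \<subseteq> Qset k z t"
proof
  fix x assume "x \<in> Pset k z t"
  then have c1: "x$k - 1 + (\<Sum>j\<in>-{k}. \<bar>x$j\<bar>) \<le> 0"
    and c2: "- (x$k - (t * z$k - 1)) + (\<Sum>j\<in>-{k}. \<bar>x$j - t * z$j\<bar>) \<le> 0"
    unfolding Pchar by auto
  define s where "s = sval k z t"
  define Zs where "Zs = (\<Sum>j\<in>-{k}. \<bar>z$j\<bar>)"
  have sdef: "s = 2 - t * z$k - t * Zs" unfolding s_def sval_def Zs_def by (simp add: algebra_simps)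
  have s0: "s > 0" using s s_def by simp
  define m where "m j = max 0 (min 1 (x$j / (t * z$j)))" for j
  define d where "d j = x$j - m j * (t * z$j)" for j
  have cl: "0 \<le> m j" "m j \<le> 1" "\<bar>x$j\<bar> = m j * \<bar>t * z$j\<bar> + \<bar>d j\<bar>"
    "\<bar>x$j - t * z$j\<bar> = (1 - m j) * \<bar>t * z$j\<bar> + \<bar>d j\<bar>" for j
    unfolding m_def d_def by (rule clamp)+
  have tz: "\<bar>t * z$j\<bar> = t * \<bar>z$j\<bar>" for j using t by (simp add: abs_mult)
  define Sm where "Sm = (\<Sum>j\<in>-{k}. m j * \<bar>z$j\<bar>)"
  define DD where "DD = (\<Sum>j\<in>-{k}. \<bar>d j\<bar>)"
  have sx: "(\<Sum>j\<in>-{k}. \<bar>x$j\<bar>) = t * Sm + DD"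
    unfolding Sm_def DD_def using cl(3) tz by (simp add: sum.distrib sum_distrib_left algebra_simps)
  have sxb: "(\<Sum>j\<in>-{k}. \<bar>x$j - t * z$j\<bar>) = t * Zs - t * Sm + DD"
  proof -
    have "(\<Sum>j\<in>-{k}. \<bar>x$j - t * z$j\<bar>) = (\<Sum>j\<in>-{k}. (t * \<bar>z$j\<bar> - t * (m j * \<bar>z$j\<bar>)) + \<bar>d j\<bar>)"
      by (rule sum.cong[OF refl]) (simp add: cl(4) tz algebra_simps)
    also have "\<dots> = t * Zs - t * Sm + DD"
      unfolding Sm_def DD_def Zs_def by (simp add: sum.distrib sum_distrib_left sum_subtractf)
    finally show ?thesis .
  qed
  define A where "A = x$k - 1 + s/2 + t * Sm"
  have absA: "\<bar>A\<bar> + DD \<le> s/2"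
    using c1 c2 sx sxb sdef unfolding A_def by linarith
  define \<mu> :: "real^'n" where "\<mu> = (\<chi> j. if j = k then 0 else m j)"
  define p :: "real^'n" where "p = (\<chi> i. if i = k then (2/s) * A else (2/s) * d i)"
  have mu: "\<mu> \<in> cbox 0 1" unfolding \<mu>_def mem_box_cart using cl(1,2) by auto
  have pin: "p \<in> cross_polytope"
  proof -
    have "(\<Sum>i\<in>UNIV. \<bar>p$i\<bar>) = \<bar>p$k\<bar> + (\<Sum>j\<in>-{k}. \<bar>p$j\<bar>)" by (rule sum_split_k)
    also have "(\<Sum>j\<in>-{k}. \<bar>p$j\<bar>) = (\<Sum>j\<in>-{k}. (2/s) * \<bar>d j\<bar>)"
      by (rule sum.cong) (use s0 in \<open>auto simp: p_def abs_mult\<close>)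
    also have "\<dots> = (2/s) * DD" unfolding DD_def by (simp add: sum_distrib_left)
    also have "\<bar>p$k\<bar> = (2/s) * \<bar>A\<bar>" using s0 by (simp add: p_def abs_mult)
    also have "(2/s) * \<bar>A\<bar> + (2/s) * DD = (2/s) * (\<bar>A\<bar> + DD)" by (rule distrib_left[symmetric])
    also have "\<dots> \<le> (2/s) * (s/2)" using absA s0 by (intro mult_left_mono) auto
    also have "\<dots> = 1" using s0 by simp
    finally show ?thesis by (simp add: cp_l1)
  qed
  have Sm2: "(\<Sum>j\<in>-{k}. \<mu>$j * \<bar>z$j\<bar>) = Sm" unfolding Sm_def \<mu>_def
    by (rule sum.cong) auto
  have xeq: "x = (1 - s / 2) *\<^sub>R axis k 1 + (s / 2) *\<^sub>R p + t *\<^sub>R (\<Sum>j\<in>UNIV. (\<mu>$j) *\<^sub>R vv k z j)"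
    unfolding vec_eq_iff
  proof
    fix i
    show "x$i = ((1 - s / 2) *\<^sub>R axis k 1 + (s / 2) *\<^sub>R p + t *\<^sub>R (\<Sum>j\<in>UNIV. (\<mu>$j) *\<^sub>R vv k z j)) $ i"
    proof (cases "i = k")
      case True
      have "((1 - s / 2) *\<^sub>R axis k 1 + (s / 2) *\<^sub>R p + t *\<^sub>R (\<Sum>j\<in>UNIV. (\<mu>$j) *\<^sub>R vv k z j)) $ i
          = (1 - s/2) + (s/2) * ((2/s) * A) - t * Sm"
        using True Sm2 by (simp add: qcomp p_def axis_comp del: sum_component)
      also have "\<dots> = x$k" unfolding A_def using s0 by (simp add: field_simps)
      finally show ?thesis using True by simp
    next
      case False
      have "((1 - s / 2) *\<^sub>R axis k 1 + (s / 2) *\<^sub>R p + t *\<^sub>R (\<Sum>j\<in>UNIV. (\<mu>$j) *\<^sub>R vv k z j)) $ i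
          = (s/2) * ((2/s) * d i) + t * (m i * z$i)"
      proof -
        have "(\<Sum>j\<in>UNIV. (\<mu>$j) *\<^sub>R vv k z j) $ i = \<mu>$i * z$i"
          using False by (simp add: qcomp del: sum_component)
        moreover have "\<mu>$i = m i" using False by (simp add: \<mu>_def)
        ultimately show ?thesis using False by (simp add: p_def axis_comp)
      qed
      also have "\<dots> = x$i" unfolding d_def using s0 by (simp add: field_simps)
      finally show ?thesis by simp
    qed
  qed
  have "(\<Sum>j\<in>UNIV. (\<mu>$j) *\<^sub>R vv k z j) \<in> T0 k z" unfolding T0_def using mu by blast
  then show "x \<in> Qset k z t" unfolding Qset_def s_def[symmetric] using pin xeq
    by (auto intro!: image_eqI[where x="(p, \<Sum>j\<in>UNIV. (\<mu>$j) *\<^sub>R vv k z j)"])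
qed

lemma P_eq_Q:
  fixes k :: "'n::finite"
  assumes t: "t > 0" and s: "sval k z t > 0"
  shows "Pset k z t = Qset k z t"
  using P_sub_Q[OF t s] Q_sub_P[OF t s] by (rule subset_antisym)

lemma cp_polytope: "polytope (cross_polytope :: (real^'n::finite) set)"
  unfolding cross_polytope_def by (rule polytope_convex_hull) simp

lemma T0_polytope:
  fixes k :: "'n::finite"
  shows "polytope (T0 k z)"
  unfolding T0_def
proof (rule polytope_linear_image[OF _ polytope_interval])
  show "linear (\<lambda>\<mu>::real^'n. \<Sum>j\<in>UNIV. (\<mu>$j) *\<^sub>R vv k z j)"
    by (rule linearI) (simp_all add: scaleR_add_left sum.distrib scaleR_sum_right)
qed

lemma sum_polytope:
  fixes A B :: "('a::euclidean_space) set"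
  assumes "polytope A" "polytope B"
  shows "polytope ((\<lambda>(p,q). w + \<alpha> *\<^sub>R p + \<beta> *\<^sub>R q) ` (A \<times> B))"
proof -
  have eq: "(\<lambda>(p,q). w + \<alpha> *\<^sub>R p + \<beta> *\<^sub>R q) ` (A \<times> B)
      = (+) w ` ((\<lambda>pq. \<alpha> *\<^sub>R fst pq + \<beta> *\<^sub>R snd pq) ` (A \<times> B))"
    unfolding image_image by (rule image_cong) (auto simp: add.assoc)
  have lin: "linear (\<lambda>pq::'a \<times> 'a. \<alpha> *\<^sub>R fst pq + \<beta> *\<^sub>R snd pq)"
    by (rule linearI) (simp_all add: algebra_simps)
  have "polytope ((\<lambda>pq. \<alpha> *\<^sub>R fst pq + \<beta> *\<^sub>R snd pq) ` (A \<times> B))"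
    by (rule polytope_linear_image[OF lin polytope_Times[OF assms]])
  then show ?thesis unfolding eq by (simp add: polytope_translation_eq)
qed

lemma fan_P:
  fixes k :: "'n::finite"
  assumes t: "t > 0" and s: "sval k z t > 0"
  shows "normal_fan (Pset k z t) = FANSET cross_polytope (T0 k z)"
proof -
  have Q: "Pset k z t = (\<lambda>(p,q). (1 - sval k z t / 2) *\<^sub>R axis k 1 + (sval k z t / 2) *\<^sub>R p + t *\<^sub>R q)
      ` (cross_polytope \<times> T0 k z)"
    using P_eq_Q[OF t s] unfolding Qset_def .
  have "polytope (Pset k z t)" unfolding Q by (rule sum_polytope[OF cp_polytope T0_polytope])
  then have "polyhedron (Pset k z t)" by (rule polytope_imp_polyhedron)
  moreover have "sval k z t / 2 > 0" using s by simp
  ultimately show ?thesis using fan_sum[OF _ t Q] by blast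
qed

lemma sgn_le: "sgn (a::real) * b \<le> \<bar>b\<bar>" "- \<bar>b\<bar> \<le> sgn (a::real) * b"
  by (cases "a > 0"; cases "a < 0"; simp)+

lemma sgn_self: "sgn (a::real) * a = \<bar>a\<bar>"
  by (cases "a > 0"; cases "a < 0"; simp)

lemma affdim_l1:
  fixes z :: "real^'n::finite"
  assumes "aff_dim (cross_polytope \<inter> ((+) z ` cross_polytope)) = int CARD('n)"
  shows "(\<Sum>i\<in>UNIV. \<bar>z$i\<bar>) < 2"
proof (rule ccontr)
  assume "\<not> (\<Sum>i\<in>UNIV. \<bar>z$i\<bar>) < 2"
  then have M: "(\<Sum>i\<in>UNIV. \<bar>z$i\<bar>) \<ge> 2" by simp
  define \<sigma> :: "real^'n" where "\<sigma> = (\<chi> i. sgn (z$i))"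
  have ip: "\<sigma> \<bullet> x = (\<Sum>i\<in>UNIV. sgn (z$i) * x$i)" for x
    unfolding \<sigma>_def inner_vec_def by simp
  have up: "\<sigma> \<bullet> x \<le> (\<Sum>i\<in>UNIV. \<bar>x$i\<bar>)" for x unfolding ip by (rule sum_mono) (rule sgn_le)
  have lo: "- (\<Sum>i\<in>UNIV. \<bar>x$i\<bar>) \<le> \<sigma> \<bullet> x" for x
    unfolding ip sum_negf[symmetric] by (rule sum_mono) (rule sgn_le)
  have sz: "\<sigma> \<bullet> z = (\<Sum>i\<in>UNIV. \<bar>z$i\<bar>)" unfolding ip by (simp add: sgn_self)
  have sub: "cross_polytope \<inter> ((+) z ` cross_polytope) \<subseteq> {x. \<sigma> \<bullet> x = 1}"
  proof
    fix x assume x: "x \<in> cross_polytope \<inter> ((+) z ` cross_polytope)"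
    then have "(\<Sum>i\<in>UNIV. \<bar>x$i\<bar>) \<le> 1" by (simp add: cp_l1)
    then have a: "\<sigma> \<bullet> x \<le> 1" using up[of x] by linarith
    from x obtain p where p: "p \<in> cross_polytope" "x = z + p" by auto
    then have "(\<Sum>i\<in>UNIV. \<bar>p$i\<bar>) \<le> 1" by (simp add: cp_l1)
    then have "\<sigma> \<bullet> p \<ge> -1" using lo[of p] by linarith
    moreover have "\<sigma> \<bullet> x = \<sigma> \<bullet> z + \<sigma> \<bullet> p" using p by (simp add: inner_add_right)
    ultimately have "\<sigma> \<bullet> x \<ge> 1" using sz M by linarith
    with a show "x \<in> {x. \<sigma> \<bullet> x = 1}" by simp
  qed
  have sn: "\<sigma> \<noteq> 0"
  proof
    assume "\<sigma> = 0"
    then have "\<sigma> \<bullet> z = 0" by simp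
    then show False using sz M by simp
  qed
  have "aff_dim (cross_polytope \<inter> ((+) z ` cross_polytope)) \<le> aff_dim {x. \<sigma> \<bullet> x = 1}"
    by (rule aff_dim_subset[OF sub])
  also have "\<dots> = int DIM(real^'n) - 1" using sn by simp
  finally show False using assms by simp
qed

lemma sval_pos:
  fixes z :: "real^'n::finite"
  assumes M: "(\<Sum>i\<in>UNIV. \<bar>z$i\<bar>) < 2"
    and t1: "1 - (2 - (\<Sum>i\<in>UNIV. \<bar>z$i\<bar>)) / 4 < t" and t2: "t < 1 + (2 - (\<Sum>i\<in>UNIV. \<bar>z$i\<bar>)) / 4"
  shows "t > 0" "sval k z t > 0"
proof -
  define S where "S = (\<Sum>i\<in>UNIV. \<bar>z$i\<bar>)"
  define \<epsilon> where "\<epsilon> = (2 - S) / 4"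
  have S0: "S \<ge> 0" unfolding S_def by (simp add: sum_nonneg)
  have S2: "S < 2" using M S_def by simp
  have e: "0 < \<epsilon>" "\<epsilon> \<le> 1/2" unfolding \<epsilon>_def using S0 S2 by auto
  show tp: "t > 0" using t1 e unfolding \<epsilon>_def S_def by linarith
  have m: "z$k + (\<Sum>j\<in>-{k}. \<bar>z$j\<bar>) \<le> S"
    unfolding S_def using sum_split_k[of "\<lambda>i. \<bar>z$i\<bar>" k] by (simp add: abs_ge_self)
  have "t * (z$k + (\<Sum>j\<in>-{k}. \<bar>z$j\<bar>)) \<le> t * S" using tp m by (intro mult_left_mono) auto
  also have "\<dots> \<le> (1 + \<epsilon>) * S" using t2 S0 unfolding \<epsilon>_def S_def by (intro mult_right_mono) auto
  also have "\<dots> = S + (2 - S) * (S / 4)" unfolding \<epsilon>_def by (simp add: algebra_simps)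
  also have "(2 - S) * (S / 4) < (2 - S) * 1" using S2 S0 by (intro mult_strict_left_mono) auto
  finally have "t * (z$k + (\<Sum>j\<in>-{k}. \<bar>z$j\<bar>)) < 2" by simp
  then show "sval k z t > 0" unfolding sval_def by simp
qed

theorem lemma6p4:
  fixes k :: "'n::finite"
  shows "(\<forall>(C::(real^'n) set) D x1 x2 x3.
            is_cone C \<and> is_cone D \<and> x1 \<noteq> x2 \<and> x1 \<noteq> x3 \<and> x2 \<noteq> x3 \<and>
            collinear {x1, x2, x3} \<and> x3 \<notin> closed_segment x1 x2 \<longrightarrow>
            homothetic (((+) x1 ` C) \<inter> ((+) x3 ` D)) (((+) x2 ` C) \<inter> ((+) x3 ` D)))
       \<and> (CARD('n) \<ge> 2 \<longrightarrow>
          (\<forall>z::real^'n.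
            aff_dim (cross_polytope \<inter> ((+) z ` cross_polytope)) = int CARD('n) \<longrightarrow>
            (\<exists>\<epsilon>>0. \<forall>t::real. 1 - \<epsilon> < t \<and> t < 1 + \<epsilon> \<longrightarrow>
               normal_fan (((+) (axis k 1) ` nonneg_comb ((\<lambda>y. y - axis k 1) ` cross_polytope))
                           \<inter> ((+) (t *\<^sub>R z - axis k 1) ` nonneg_comb ((\<lambda>y. y + axis k 1) ` cross_polytope)))
             = normal_fan (((+) (axis k 1) ` nonneg_comb ((\<lambda>y. y - axis k 1) ` cross_polytope))
                           \<inter> ((+) (z - axis k 1) ` nonneg_comb ((\<lambda>y. y + axis k 1) ` cross_polytope))))))"
proof (intro conjI allI impI)
  fix C D :: "(real^'n) set" and x1 x2 x3 :: "real^'n"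
  assume "is_cone C \<and> is_cone D \<and> x1 \<noteq> x2 \<and> x1 \<noteq> x3 \<and> x2 \<noteq> x3 \<and>
            collinear {x1, x2, x3} \<and> x3 \<notin> closed_segment x1 x2"
  then show "homothetic (((+) x1 ` C) \<inter> ((+) x3 ` D)) (((+) x2 ` C) \<inter> ((+) x3 ` D))"
    using partA by blast
next
  fix z :: "real^'n"
  assume aff: "aff_dim (cross_polytope \<inter> ((+) z ` cross_polytope)) = int CARD('n)"
  have M: "(\<Sum>i\<in>UNIV. \<bar>z$i\<bar>) < 2" by (rule affdim_l1[OF aff])
  define \<epsilon> where "\<epsilon> = (2 - (\<Sum>i\<in>UNIV. \<bar>z$i\<bar>)) / 4"
  have e0: "\<epsilon> > 0" unfolding \<epsilon>_def using M by simp
  have one: "1 - \<epsilon> < 1" "1 < 1 + \<epsilon>" using e0 by auto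
  have F1: "normal_fan (Pset k z 1) = FANSET cross_polytope (T0 k z)"
    using sval_pos[OF M one[unfolded \<epsilon>_def]] by (intro fan_P) auto
  show "\<exists>\<epsilon>>0. \<forall>t::real. 1 - \<epsilon> < t \<and> t < 1 + \<epsilon> \<longrightarrow>
               normal_fan (((+) (axis k 1) ` nonneg_comb ((\<lambda>y. y - axis k 1) ` cross_polytope))
                           \<inter> ((+) (t *\<^sub>R z - axis k 1) ` nonneg_comb ((\<lambda>y. y + axis k 1) ` cross_polytope)))
             = normal_fan (((+) (axis k 1) ` nonneg_comb ((\<lambda>y. y - axis k 1) ` cross_polytope))
                           \<inter> ((+) (z - axis k 1) ` nonneg_comb ((\<lambda>y. y + axis k 1) ` cross_polytope)))"
  proof (intro exI conjI allI impI)
    show "\<epsilon> > 0" by (rule e0)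
    fix t :: real assume "1 - \<epsilon> < t \<and> t < 1 + \<epsilon>"
    then have tt: "1 - \<epsilon> < t" "t < 1 + \<epsilon>" by auto
    have Ft: "normal_fan (Pset k z t) = FANSET cross_polytope (T0 k z)"
      using sval_pos[OF M tt[unfolded \<epsilon>_def]] by (intro fan_P) auto
    have "normal_fan (Pset k z t) = normal_fan (Pset k z 1)" using Ft F1 by simp
    then show "normal_fan (((+) (axis k 1) ` nonneg_comb ((\<lambda>y. y - axis k 1) ` cross_polytope))
                           \<inter> ((+) (t *\<^sub>R z - axis k 1) ` nonneg_comb ((\<lambda>y. y + axis k 1) ` cross_polytope)))
             = normal_fan (((+) (axis k 1) ` nonneg_comb ((\<lambda>y. y - axis k 1) ` cross_polytope))
                           \<inter> ((+) (z - axis k 1) ` nonneg_comb ((\<lambda>y. y + axis k 1) ` cross_polytope)))"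
      unfolding Pset_def by simp
  qed
qed

end
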